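(* Let $k\ge1$ and integers $0\le w<w'\le k$. Let $\mathcal{V}_w^k$ (resp. $\mathcal{V}_{w'}^k$) be the set of vectors in $\{0,1\}^k$ with exactly $w$ (resp. $w'$) ones, and let $L^k_{w,w'}=\prod_{i=0}^{w'-w-1}\frac{w'-i}{k-w-i}$. Let $\tilde{G}$ be the bipartite graph whose left vertex class is $\mathcal{V}_w^k$ and whose right vertex class is the disjoint union of $\lceil L^k_{w,w'}\rceil$ copies $\mathcal{V}^k_{w',1},\ldots,\mathcal{V}^k_{w',\lceil L^k_{w,w'}\rceil}$ of $\mathcal{V}_{w'}^k$, where $v\in\mathcal{V}_w^k$ is adjacent to the copy of $v'\in\mathcal{V}_{w'}^k$ in $\mathcal{V}^k_{w',l}$ (for each $l$) if and only if the support of $v$ is a subset of the support of $v'$. Then $\tilde{G}$ has a perfect matching with respect to $\mathcal{V}_w^k$.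
   Context: A perfect matching with respect to $\mathcal{V}_w^k$ is a set of $|\mathcal{V}_w^k|$ edges, no two of which share a vertex. The support of a vector is the set of indices of its nonzero entries. *)

theory Defs
  imports Main Complex_Main
begin

text \<open>Vectors in {0,1}^k are represented as lists of naturals of length k
with entries in {0,1}. The support is the set of indices of nonzero entries.\<close>

definition supp :: "nat list \<Rightarrow> nat set" where
  "supp v = {i. i < length v \<and> v ! i \<noteq> 0}"

definition weight_vecs :: "nat \<Rightarrow> nat \<Rightarrow> nat list set" where
  "weight_vecs k w = {v. length v = k \<and> set v \<subseteq> {0, 1} \<and> card (supp v) = w}"

definition L_const :: "nat \<Rightarrow> nat \<Rightarrow> nat \<Rightarrow> real" where
  "L_const k w w' = (\<Prod>i<w' - w. (real w' - real i) / (real k - real w - real i))"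

text \<open>The bipartite graph G~: left class weight_vecs k w, right class the disjoint
union of copies l = 1..ceil(L) of weight_vecs k w'; a right vertex is a pair (v', l).\<close>

definition tG_right :: "nat \<Rightarrow> nat \<Rightarrow> nat \<Rightarrow> (nat list \<times> nat) set" where
  "tG_right k w w' = weight_vecs k w' \<times> {1 .. nat \<lceil>L_const k w w'\<rceil>}"

definition tG_edges :: "nat \<Rightarrow> nat \<Rightarrow> nat \<Rightarrow> (nat list \<times> (nat list \<times> nat)) set" where
  "tG_edges k w w' = {(v, r). v \<in> weight_vecs k w \<and> r \<in> tG_right k w w' \<and> supp v \<subseteq> supp (fst r)}"

text \<open>A perfect matching with respect to the left class A: a set of card A edges,
no two of which share a vertex (in a bipartite graph with edges (left,right), two
distinct edges share a vertex iff they agree on the left or on the right end).\<close>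

definition perfect_matching_wrt :: "('a \<times> 'b) set \<Rightarrow> 'a set \<Rightarrow> ('a \<times> 'b) set \<Rightarrow> bool" where
  "perfect_matching_wrt E A M \<longleftrightarrow>
     M \<subseteq> E \<and> finite M \<and> card M = card A \<and>
     (\<forall>e\<in>M. \<forall>e'\<in>M. e \<noteq> e' \<longrightarrow> fst e \<noteq> fst e' \<and> snd e \<noteq> snd e')"

end

theory Submission
  imports Defs
begin


lemma hall:
  fixes A :: "'a \<Rightarrow> 'b set"
  assumes "finite I" "\<forall>i\<in>I. finite (A i)" "\<forall>J\<subseteq>I. card J \<le> card (\<Union>(A ` J))"
  shows "\<exists>f. inj_on f I \<and> (\<forall>i\<in>I. f i \<in> A i)"
  using assms
proof (induction "card I" arbitrary: I A rule: less_induct)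
  case less
  note fin = less.prems(1) and finA = less.prems(2) and H = less.prems(3)
  consider "I = {}"
    | "I \<noteq> {}" "\<forall>J. J \<subseteq> I \<and> J \<noteq> {} \<and> J \<noteq> I \<longrightarrow> card J < card (\<Union>(A ` J))"
    | J where "J \<subseteq> I" "J \<noteq> {}" "J \<noteq> I" "card (\<Union>(A ` J)) \<le> card J"
    by (meson not_less)
  then show ?case
  proof cases
    case 1 then show ?thesis by auto
  next
    case 2
    then obtain i0 where i0: "i0 \<in> I" by auto
    have "card {i0} \<le> card (A i0)" using H[rule_format, of "{i0}"] i0 by auto
    then have "A i0 \<noteq> {}" by auto
    then obtain x where x: "x \<in> A i0" by auto
    define A' where "A' = (\<lambda>i. A i - {x})"
    have lt: "card (I - {i0}) < card I" by (rule card_Diff1_less[OF fin i0])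
    have H': "\<forall>J\<subseteq>I - {i0}. card J \<le> card (\<Union>(A' ` J))"
    proof (intro allI impI)
      fix J assume J: "J \<subseteq> I - {i0}"
      show "card J \<le> card (\<Union>(A' ` J))"
      proof (cases "J = {}")
        case True then show ?thesis by simp
      next
        case False
        have fJ: "finite J" using J fin finite_subset by blast
        have fU: "finite (\<Union>(A ` J))" using fJ finA J by auto
        have "card J < card (\<Union>(A ` J))" using 2(2) J False i0 by blast
        have lt0: "card J < card (\<Union>(A ` J))" using 2(2) J False i0 by blast
        have eq0: "\<Union>(A' ` J) = \<Union>(A ` J) - {x}" unfolding A'_def by auto
        have ge0: "card (\<Union>(A ` J) - {x}) \<ge> card (\<Union>(A ` J)) - 1" using fU by (simp add: card_Diff_singleton_if)
        have "card J \<le> card (\<Union>(A ` J)) - 1" using lt0 by arith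
        then show ?thesis using ge0 eq0 by simp
      qed
    qed
    obtain f' where f': "inj_on f' (I - {i0})" "\<forall>i\<in>I - {i0}. f' i \<in> A' i"
      using less.hyps[OF lt, of A'] fin finA H' unfolding A'_def by auto
    define f where "f = f'(i0 := x)"
    have "inj_on f (I - {i0})" unfolding f_def using f'(1) by (simp add: inj_on_def)
    moreover have "f i0 \<notin> f ` (I - {i0})" using f'(2) unfolding f_def A'_def by auto
    ultimately have "inj_on f (insert i0 (I - {i0}))" by (simp only: inj_on_insert Diff_idemp) simp
    then have "inj_on f I" using i0 by (simp add: insert_absorb)
    moreover have "\<forall>i\<in>I. f i \<in> A i" using f'(2) x unfolding f_def A'_def by auto
    ultimately show ?thesis by blast
  next
    case 3
    define U where "U = \<Union>(A ` J)"
    have fJ: "finite J" using 3(1) fin finite_subset by blast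
    have fU: "finite U" using fJ finA 3(1) unfolding U_def by auto
    have cU: "card U = card J" using 3(4) H 3(1) unfolding U_def by (simp add: le_antisym)
    have lt1: "card J < card I" using 3 fin by (simp add: psubset_card_mono psubsetI)
    obtain f1 where f1: "inj_on f1 J" "\<forall>i\<in>J. f1 i \<in> A i"
    proof -
      have "\<forall>i\<in>J. finite (A i)" using finA 3(1) by blast
      moreover have "\<forall>K\<subseteq>J. card K \<le> card (\<Union>(A ` K))" using H 3(1) by blast
      ultimately show ?thesis using less.hyps[OF lt1, of A] fJ that by blast
    qed
    define A' where "A' = (\<lambda>i. A i - U)"
    have "I - J \<subset> I" using 3(1) 3(2) by blast
    then have lt2: "card (I - J) < card I" by (rule psubset_card_mono[OF fin])
    have H': "\<forall>K\<subseteq>I - J. card K \<le> card (\<Union>(A' ` K))"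
    proof (intro allI impI)
      fix K assume K: "K \<subseteq> I - J"
      have fK: "finite K" using K fin finite_subset by blast
      have fKJ: "finite (\<Union>(A ` (K \<union> J)))" using fK fJ finA K 3(1) by auto
      have eq: "\<Union>(A' ` K) = \<Union>(A ` (K \<union> J)) - U" unfolding A'_def U_def by auto
      have sub: "U \<subseteq> \<Union>(A ` (K \<union> J))" unfolding U_def by auto
      have "card (\<Union>(A' ` K)) = card (\<Union>(A ` (K \<union> J))) - card U"
        using eq sub fKJ by (simp add: card_Diff_subset finite_subset)
      moreover have "K \<union> J \<subseteq> I" using K 3(1) by blast
      then have "card (K \<union> J) \<le> card (\<Union>(A ` (K \<union> J)))" using H by blast
      moreover have "card (K \<union> J) = card K + card J" using fK fJ K by (subst card_Un_disjoint) auto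
      ultimately show "card K \<le> card (\<Union>(A' ` K))" using cU by linarith
    qed
    obtain f2 where f2: "inj_on f2 (I - J)" "\<forall>i\<in>I - J. f2 i \<in> A' i"
      using less.hyps[OF lt2, of A'] fin finA H' unfolding A'_def by auto
    define f where "f = (\<lambda>i. if i \<in> J then f1 i else f2 i)"
    have "inj_on f I"
    proof (rule inj_onI)
      fix a b assume ab: "a \<in> I" "b \<in> I" "f a = f b"
      show "a = b"
      proof (cases "a \<in> J"; cases "b \<in> J")
        assume "a \<in> J" "b \<in> J" then show ?thesis using ab f1(1) unfolding f_def by (auto dest: inj_onD)
      next
        assume "a \<notin> J" "b \<notin> J" then show ?thesis using ab f2(1) unfolding f_def by (auto dest: inj_onD)
      next
        assume "a \<in> J" "b \<notin> J"
        then have "f a \<in> U" "f b \<notin> U" using ab(1,2) f1(2) f2(2) unfolding f_def A'_def U_def by auto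
        then show ?thesis using ab by simp
      next
        assume "a \<notin> J" "b \<in> J"
        then have "f b \<in> U" "f a \<notin> U" using ab(1,2) f1(2) f2(2) unfolding f_def A'_def U_def by auto
        then show ?thesis using ab by simp
      qed
    qed
    moreover have "\<forall>i\<in>I. f i \<in> A i" using f1(2) f2(2) unfolding f_def A'_def by auto
    ultimately show ?thesis by blast
  qed
qed



lemma arith_L:
  assumes "w < w'" "w' \<le> k"
  shows "real (w' choose w) = L_const k w w' * real ((k - w) choose (w' - w))"
proof -
  define d where "d = w' - w"
  have P1: "real (w' choose d) = (\<Prod>i<d. real w' - real i) / fact d"
    by (simp add: binomial_gbinomial gbinomial_prod_rev atLeast0LessThan)
  have P2: "real ((k - w) choose d) = (\<Prod>i<d. real k - real w - real i) / fact d"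
    using assms by (simp add: binomial_gbinomial gbinomial_prod_rev atLeast0LessThan of_nat_diff)
  have nz: "real ((k - w) choose d) \<noteq> 0" using assms unfolding d_def by simp
  have L: "L_const k w w' = (\<Prod>i<d. real w' - real i) / (\<Prod>i<d. real k - real w - real i)"
    unfolding L_const_def d_def by (simp add: prod_dividef)
  have "L_const k w w' = real (w' choose d) / real ((k - w) choose d)"
    unfolding L P1 P2 by simp
  moreover have "w' choose d = w' choose w"
    using assms binomial_symmetric[of d w'] unfolding d_def by simp
  ultimately show ?thesis using nz unfolding d_def by simp
qed

lemma supp_sub: "supp v \<subseteq> {..<length v}"
  unfolding supp_def by auto

lemma supp_inj:
  assumes "length v1 = k" "set v1 \<subseteq> {0,1}" "length v2 = k" "set v2 \<subseteq> {0,1}" "supp v1 = supp v2"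
  shows "v1 = v2"
proof (rule nth_equalityI)
  show "length v1 = length v2" using assms by simp
  fix i assume i: "i < length v1"
  have a: "v1 ! i \<in> {0,1}" using assms(2) i nth_mem by blast
  have b: "v2 ! i \<in> {0,1}" using assms(1,3,4) i nth_mem by (metis subsetD)
  have e1: "(v1 ! i \<noteq> 0) = (i \<in> supp v1)" using i unfolding supp_def by simp
  have e2: "(v2 ! i \<noteq> 0) = (i \<in> supp v2)" using i assms(1,3) unfolding supp_def by simp
  have "(v1 ! i \<noteq> 0) = (v2 ! i \<noteq> 0)" using e1 e2 assms(5) by simp
  then show "v1 ! i = v2 ! i" using a b by auto
qed

lemma wv_supp: "v \<in> weight_vecs k w \<Longrightarrow> supp v \<subseteq> {..<k} \<and> card (supp v) = w"
  using supp_sub[of v] unfolding weight_vecs_def by simp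

lemma card_wv:
  "card {v \<in> weight_vecs k w. P (supp v)} = card {T. T \<subseteq> {..<k} \<and> card T = w \<and> P T}"
proof -
  let ?V = "{v \<in> weight_vecs k w. P (supp v)}"
  have inj: "inj_on supp ?V"
  proof (rule inj_onI)
    fix a b assume "a \<in> ?V" "b \<in> ?V" "supp a = supp b"
    then show "a = b" by (intro supp_inj[of a k b]) (auto simp: weight_vecs_def)
  qed
  have im: "supp ` ?V = {T. T \<subseteq> {..<k} \<and> card T = w \<and> P T}"
  proof
    show "supp ` ?V \<subseteq> {T. T \<subseteq> {..<k} \<and> card T = w \<and> P T}"
      using wv_supp by blast
    show "{T. T \<subseteq> {..<k} \<and> card T = w \<and> P T} \<subseteq> supp ` ?V"
    proof
      fix T assume T: "T \<in> {T. T \<subseteq> {..<k} \<and> card T = w \<and> P T}"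
      define v where "v = map (\<lambda>i. if i \<in> T then 1 else 0::nat) [0..<k]"
      have "supp v = T" using T unfolding v_def supp_def by (auto split: if_splits)
      moreover have "length v = k" unfolding v_def by simp
      moreover have "set v \<subseteq> {0,1}" unfolding v_def by auto
      ultimately have "v \<in> ?V" using T unfolding weight_vecs_def by simp
      then show "T \<in> supp ` ?V" using \<open>supp v = T\<close> by blast
    qed
  qed
  have "card (supp ` ?V) = card ?V" by (rule card_image[OF inj])
  then show ?thesis using im by simp
qed

lemma fin_wv: "finite (weight_vecs k w)"
proof -
  have "weight_vecs k w \<subseteq> {xs. set xs \<subseteq> {0,1} \<and> length xs = k}"
    unfolding weight_vecs_def by auto
  moreover have "finite {xs. set xs \<subseteq> {0::nat,1} \<and> length xs = k}"
    by (rule finite_lists_length_eq) simp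
  ultimately show ?thesis by (rule finite_subset)
qed


lemma count_up:
  assumes "S \<subseteq> {..<k}" "card S = w" "w \<le> w'" "w' \<le> k"
  shows "card {T. T \<subseteq> {..<k} \<and> card T = w' \<and> S \<subseteq> T} = (k - w) choose (w' - w)"
proof -
  have fS: "finite S" using assms(1) finite_subset by blast
  let ?X = "{T. T \<subseteq> {..<k} \<and> card T = w' \<and> S \<subseteq> T}"
  let ?Y = "{U. U \<subseteq> {..<k} - S \<and> card U = w' - w}"
  have inj: "inj_on (\<lambda>T. T - S) ?X"
  proof (rule inj_onI)
    fix T1 T2 assume "T1 \<in> ?X" "T2 \<in> ?X" "T1 - S = T2 - S"
    then show "T1 = T2" by blast
  qed
  have im: "(\<lambda>T. T - S) ` ?X = ?Y"
  proof
    show "(\<lambda>T. T - S) ` ?X \<subseteq> ?Y"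
    proof
      fix U assume "U \<in> (\<lambda>T. T - S) ` ?X"
      then obtain T where T: "T \<in> ?X" "U = T - S" by blast
      have "finite T" using T by (metis (no_types, lifting) mem_Collect_eq finite_lessThan finite_subset)
      then have "card (T - S) = w' - w" using T assms fS by (simp add: card_Diff_subset)
      moreover have "T - S \<subseteq> {..<k} - S" using T by blast
      ultimately show "U \<in> ?Y" using T(2) by blast
    qed
    show "?Y \<subseteq> (\<lambda>T. T - S) ` ?X"
    proof
      fix U assume U: "U \<in> ?Y"
      have fU: "finite U" using U by (metis (no_types, lifting) mem_Collect_eq finite_lessThan finite_Diff finite_subset)
      have "card (U \<union> S) = w'" using U fU fS assms by (subst card_Un_disjoint) auto
      moreover have "U \<union> S \<subseteq> {..<k}" using U assms(1) by blast
      ultimately have "U \<union> S \<in> ?X" by blast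
      moreover have "U = (U \<union> S) - S" using U by blast
      ultimately show "U \<in> (\<lambda>T. T - S) ` ?X" by blast
    qed
  qed
  have "card ((\<lambda>T. T - S) ` ?X) = card ?X" by (rule card_image[OF inj])
  then have "card ?X = card ?Y" using im by simp
  also have "\<dots> = card ({..<k} - S) choose (w' - w)" by (rule n_subsets) simp
  also have "card ({..<k} - S) = k - w" using assms fS by (simp add: card_Diff_subset)
  finally show ?thesis .
qed



theorem lemma10:
  fixes k w w' :: nat
  assumes "k \<ge> 1" and "w < w'" and "w' \<le> k"
  shows "\<exists>M. perfect_matching_wrt (tG_edges k w w') (weight_vecs k w) M"
proof -
  define c where "c = nat \<lceil>L_const k w w'\<rceil>"
  define I where "I = weight_vecs k w"
  define R where "R = tG_right k w w'"
  define A where "A = (\<lambda>v. {r \<in> R. supp v \<subseteq> supp (fst r)})"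
  define b where "b = w' choose w"
  have Rdef: "R = weight_vecs k w' \<times> {1..c}" unfolding R_def tG_right_def c_def by simp
  have finI: "finite I" unfolding I_def by (rule fin_wv)
  have finR: "finite R" unfolding Rdef using fin_wv by simp
  have finA: "\<forall>i\<in>I. finite (A i)" unfolding A_def using finR by simp
  have bpos: "b > 0" unfolding b_def using assms by simp
  have cardA: "b \<le> card (A v)" if v: "v \<in> I" for v
  proof -
    have S: "supp v \<subseteq> {..<k}" "card (supp v) = w" using wv_supp v unfolding I_def by auto
    have "A v = {v' \<in> weight_vecs k w'. supp v \<subseteq> supp v'} \<times> {1..c}"
      unfolding A_def Rdef by auto
    then have "card (A v) = card {v' \<in> weight_vecs k w'. supp v \<subseteq> supp v'} * c"
      by (simp add: card_cartesian_product)
    also have "card {v' \<in> weight_vecs k w'. supp v \<subseteq> supp v'} = card {T. T \<subseteq> {..<k} \<and> card T = w' \<and> supp v \<subseteq> T}"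
      by (rule card_wv)
    also have "\<dots> = (k - w) choose (w' - w)"
      by (rule count_up) (use S assms in auto)
    finally have eq: "card (A v) = ((k - w) choose (w' - w)) * c" .
    have "real b = L_const k w w' * real ((k - w) choose (w' - w))"
      unfolding b_def by (rule arith_L) (use assms in auto)
    also have "\<dots> \<le> real c * real ((k - w) choose (w' - w))"
      unfolding c_def by (intro mult_right_mono real_nat_ceiling_ge) simp
    finally have "real b \<le> real (card (A v))" unfolding eq by (simp add: mult.commute)
    then show ?thesis by simp
  qed
  have cardB: "card {v \<in> J. r \<in> A v} \<le> b" if J: "J \<subseteq> I" for J r
  proof (cases "r \<in> R")
    case False
    then have e: "{v \<in> J. r \<in> A v} = {}" unfolding A_def by auto
    show ?thesis unfolding e by simp
  next
    case True
    then have "fst r \<in> weight_vecs k w'" unfolding Rdef by auto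
    then have r: "supp (fst r) \<subseteq> {..<k}" "card (supp (fst r)) = w'" using wv_supp by auto
    have "{v \<in> J. r \<in> A v} \<subseteq> {v \<in> weight_vecs k w. supp v \<subseteq> supp (fst r)}"
      using J True unfolding A_def I_def by auto
    then have "card {v \<in> J. r \<in> A v} \<le> card {v \<in> weight_vecs k w. supp v \<subseteq> supp (fst r)}"
      by (intro card_mono) (use fin_wv in auto)
    also have "\<dots> = card {T. T \<subseteq> {..<k} \<and> card T = w \<and> T \<subseteq> supp (fst r)}" by (rule card_wv)
    also have "{T. T \<subseteq> {..<k} \<and> card T = w \<and> T \<subseteq> supp (fst r)} = {T. T \<subseteq> supp (fst r) \<and> card T = w}"
      using r by blast
    also have "card \<dots> = b" unfolding b_def using r
      by (subst n_subsets) (auto intro: finite_subset)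
    finally show ?thesis .
  qed
  have H: "\<forall>J\<subseteq>I. card J \<le> card (\<Union>(A ` J))"
  proof (intro allI impI)
    fix J assume J: "J \<subseteq> I"
    define N where "N = \<Union>(A ` J)"
    have fJ: "finite J" using J finI finite_subset by blast
    have NR: "N \<subseteq> R" unfolding N_def A_def by auto
    have fN: "finite N" using NR finR finite_subset by blast
    have "card J * b = (\<Sum>v\<in>J. b)" by simp
    also have "\<dots> \<le> (\<Sum>v\<in>J. card (A v))" using cardA J by (intro sum_mono) auto
    also have "\<dots> = (\<Sum>v\<in>J. \<Sum>r\<in>N. if r \<in> A v then 1 else 0)"
    proof (rule sum.cong[OF refl])
      fix v assume v: "v \<in> J"
      have "A v = {r \<in> N. r \<in> A v}" using v unfolding N_def by auto
      then have "card (A v) = card {r \<in> N. r \<in> A v}" by simp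
      also have "\<dots> = (\<Sum>r\<in>N. if r \<in> A v then 1 else 0)"
        using fN by (simp add: sum.inter_filter[symmetric])
      finally show "card (A v) = (\<Sum>r\<in>N. if r \<in> A v then 1 else 0)" .
    qed
    also have "\<dots> = (\<Sum>r\<in>N. \<Sum>v\<in>J. if r \<in> A v then 1 else 0)" by (rule sum.swap)
    also have "\<dots> = (\<Sum>r\<in>N. card {v \<in> J. r \<in> A v})"
      using fJ by (simp add: sum.inter_filter[symmetric])
    also have "\<dots> \<le> (\<Sum>r\<in>N. b)" using cardB J by (intro sum_mono) auto
    also have "\<dots> = card N * b" by simp
    finally have "card J * b \<le> card N * b" .
    then show "card J \<le> card (\<Union>(A ` J))" using bpos unfolding N_def by simp
  qed
  obtain f where f: "inj_on f I" "\<forall>i\<in>I. f i \<in> A i"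
    using hall[OF finI finA H] by blast
  define M where "M = (\<lambda>v. (v, f v)) ` I"
  have "M \<subseteq> tG_edges k w w'"
  proof
    fix e assume "e \<in> M"
    then obtain v where v: "v \<in> I" "e = (v, f v)" unfolding M_def by blast
    then have "f v \<in> R" "supp v \<subseteq> supp (fst (f v))" using f(2) unfolding A_def by auto
    then show "e \<in> tG_edges k w w'" using v unfolding tG_edges_def R_def I_def by simp
  qed
  moreover have "finite M" unfolding M_def using finI by simp
  moreover have "card M = card I" unfolding M_def
    by (rule card_image) (auto intro: inj_onI)
  moreover have "\<forall>e\<in>M. \<forall>e'\<in>M. e \<noteq> e' \<longrightarrow> fst e \<noteq> fst e' \<and> snd e \<noteq> snd e'"
    using f(1) unfolding M_def by (auto dest: inj_onD)
  ultimately show ?thesis unfolding perfect_matching_wrt_def I_def by blast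
qed

end
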